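(* Let $(\mathsf P,\mathcal O)$ be a semitopology and $p\in\mathsf P$. The following are equivalent: (1) $p$ is weakly regular, i.e. $p\in K(p)$; (2) $I(p)$ is a closed neighbourhood of $p$; (3) the set of closed neighbourhoods of $p$, ordered by subset inclusion, has a least element; (4) $I(p)$ is the least element of the set of closed neighbourhoods of $p$ ordered by subset inclusion.
   Context: A semitopology is a pair $(\mathsf P,\mathcal O)$ where $\mathsf P$ is a set and $\mathcal O\subseteq\mathcal P(\mathsf P)$ contains $\varnothing$ and $\mathsf P$ and is closed under arbitrary unions. Points $p,p'$ are intertwined when every open set containing $p$ intersects every open set containing $p'$; $I(p)$ is the set of points intertwined with $p$. $\mathrm{int}(R)$ is the union of all open sets contained in $R$, and $K(p)=\mathrm{int}(I(p))$. The closure $\overline{R}$ of $R$ is the set of points $q$ such that every open set containing $q$ intersects $R$; $C$ is closed when $C=\overline C$ (equivalently, $C$ is the complement of an open set). A closed neighbourhood of $p$ is a closed set $C$ with $p\in\mathrm{int}(C)$. *)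

theory Defs
  imports Main
begin

definition semitopology :: "'a set \<Rightarrow> 'a set set \<Rightarrow> bool" where
  "semitopology P Opn \<longleftrightarrow> Opn \<subseteq> Pow P \<and> {} \<in> Opn \<and> P \<in> Opn \<and> (\<forall>X. X \<subseteq> Opn \<longrightarrow> \<Union>X \<in> Opn)"

definition intertwined :: "'a set set \<Rightarrow> 'a \<Rightarrow> 'a \<Rightarrow> bool" where
  "intertwined Opn p p' \<longleftrightarrow> (\<forall>U\<in>Opn. \<forall>U'\<in>Opn. p \<in> U \<longrightarrow> p' \<in> U' \<longrightarrow> U \<inter> U' \<noteq> {})"

definition intertwined_set :: "'a set \<Rightarrow> 'a set set \<Rightarrow> 'a \<Rightarrow> 'a set" where
  "intertwined_set P Opn p = {p'\<in>P. intertwined Opn p p'}"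

definition sinterior :: "'a set set \<Rightarrow> 'a set \<Rightarrow> 'a set" where
  "sinterior Opn R = \<Union>{U\<in>Opn. U \<subseteq> R}"

definition kernel_K :: "'a set \<Rightarrow> 'a set set \<Rightarrow> 'a \<Rightarrow> 'a set" where
  "kernel_K P Opn p = sinterior Opn (intertwined_set P Opn p)"

definition sclosure :: "'a set \<Rightarrow> 'a set set \<Rightarrow> 'a set \<Rightarrow> 'a set" where
  "sclosure P Opn R = {q\<in>P. \<forall>U\<in>Opn. q \<in> U \<longrightarrow> U \<inter> R \<noteq> {}}"

definition sclosed :: "'a set \<Rightarrow> 'a set set \<Rightarrow> 'a set \<Rightarrow> bool" where
  "sclosed P Opn C \<longleftrightarrow> C = sclosure P Opn C"

definition closed_nbhd :: "'a set \<Rightarrow> 'a set set \<Rightarrow> 'a \<Rightarrow> 'a set \<Rightarrow> bool" where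
  "closed_nbhd P Opn p C \<longleftrightarrow> sclosed P Opn C \<and> p \<in> sinterior Opn C"

definition weakly_regular :: "'a set \<Rightarrow> 'a set set \<Rightarrow> 'a \<Rightarrow> bool" where
  "weakly_regular P Opn p \<longleftrightarrow> p \<in> kernel_K P Opn p"

definition is_least_subset :: "'a set set \<Rightarrow> 'a set \<Rightarrow> bool" where
  "is_least_subset S x \<longleftrightarrow> x \<in> S \<and> (\<forall>y\<in>S. x \<subseteq> y)"

end

theory Submission
  imports Defs
begin

lemma I_closed:
  assumes "semitopology P Opn"
  shows "sclosed P Opn (intertwined_set P Opn p)"
  unfolding sclosed_def
proof
  show "intertwined_set P Opn p \<subseteq> sclosure P Opn (intertwined_set P Opn p)"
    unfolding sclosure_def intertwined_set_def by blast
  show "sclosure P Opn (intertwined_set P Opn p) \<subseteq> intertwined_set P Opn p"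
  proof
    fix q assume q: "q \<in> sclosure P Opn (intertwined_set P Opn p)"
    have "intertwined Opn p q"
      unfolding intertwined_def
    proof (intro ballI impI)
      fix U U' assume o: "U \<in> Opn" "U' \<in> Opn" "p \<in> U" "q \<in> U'"
      then obtain r where "r \<in> U'" "r \<in> intertwined_set P Opn p"
        using q unfolding sclosure_def by blast
      then show "U \<inter> U' \<noteq> {}" using o unfolding intertwined_set_def intertwined_def by blast
    qed
    then show "q \<in> intertwined_set P Opn p" using q unfolding sclosure_def intertwined_set_def by blast
  qed
qed

lemma closure_closed:
  assumes "semitopology P Opn" "U \<in> Opn"
  shows "sclosed P Opn (sclosure P Opn U)"
proof -
  have UP: "U \<subseteq> P" using assms unfolding semitopology_def by blast
  show ?thesis unfolding sclosed_def
  proof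
    show "sclosure P Opn U \<subseteq> sclosure P Opn (sclosure P Opn U)"
      using UP unfolding sclosure_def by blast
    show "sclosure P Opn (sclosure P Opn U) \<subseteq> sclosure P Opn U"
      unfolding sclosure_def by blast
  qed
qed

lemma I_least:
  assumes "semitopology P Opn" "closed_nbhd P Opn p C"
  shows "intertwined_set P Opn p \<subseteq> C"
proof
  fix q assume q: "q \<in> intertwined_set P Opn p"
  obtain U where U: "U \<in> Opn" "U \<subseteq> C" "p \<in> U"
    using assms(2) unfolding closed_nbhd_def sinterior_def by blast
  show "q \<in> C"
  proof (rule ccontr)
    assume "q \<notin> C"
    then have "q \<notin> sclosure P Opn C" using assms(2) unfolding closed_nbhd_def sclosed_def by simp
    then obtain U' where "U' \<in> Opn" "q \<in> U'" "U' \<inter> C = {}"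
      using q unfolding sclosure_def intertwined_set_def by blast
    then show False using U q unfolding intertwined_set_def intertwined_def by blast
  qed
qed

theorem proposition5p15:
  assumes "semitopology P Opn" and "p \<in> P"
  shows "(weakly_regular P Opn p \<longleftrightarrow> closed_nbhd P Opn p (intertwined_set P Opn p))
     \<and> (closed_nbhd P Opn p (intertwined_set P Opn p) \<longleftrightarrow> (\<exists>C. is_least_subset {C. closed_nbhd P Opn p C} C))
     \<and> ((\<exists>C. is_least_subset {C. closed_nbhd P Opn p C} C) \<longleftrightarrow> is_least_subset {C. closed_nbhd P Opn p C} (intertwined_set P Opn p))"
proof -
  have e1: "weakly_regular P Opn p \<longleftrightarrow> closed_nbhd P Opn p (intertwined_set P Opn p)"
    using I_closed[OF assms(1)] unfolding weakly_regular_def closed_nbhd_def kernel_K_def by blast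
  have e24: "closed_nbhd P Opn p (intertwined_set P Opn p) \<Longrightarrow> is_least_subset {C. closed_nbhd P Opn p C} (intertwined_set P Opn p)"
    using I_least[OF assms(1)] unfolding is_least_subset_def by blast
  have e32: "closed_nbhd P Opn p (intertwined_set P Opn p)" if "is_least_subset {C. closed_nbhd P Opn p C} C" for C
  proof -
    have C: "closed_nbhd P Opn p C" and L: "\<And>D. closed_nbhd P Opn p D \<Longrightarrow> C \<subseteq> D"
      using that unfolding is_least_subset_def by auto
    have sub: "C \<subseteq> intertwined_set P Opn p"
    proof
      fix q assume qC: "q \<in> C"
      have qP: "q \<in> P" using C qC unfolding closed_nbhd_def sclosed_def sclosure_def by blast
      have "intertwined Opn p q"
        unfolding intertwined_def
      proof (intro ballI impI)
        fix U U' assume o: "U \<in> Opn" "U' \<in> Opn" "p \<in> U" "q \<in> U'"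
        show "U \<inter> U' \<noteq> {}"
        proof
          assume dis: "U \<inter> U' = {}"
          have UP: "U \<subseteq> P" using assms(1) o(1) unfolding semitopology_def by blast
          have "closed_nbhd P Opn p (sclosure P Opn U)"
            unfolding closed_nbhd_def
          proof
            show "sclosed P Opn (sclosure P Opn U)" by (rule closure_closed[OF assms(1) o(1)])
            have "U \<subseteq> sclosure P Opn U" using UP unfolding sclosure_def by blast
            then show "p \<in> sinterior Opn (sclosure P Opn U)" using o unfolding sinterior_def by blast
          qed
          then have "q \<in> sclosure P Opn U" using L qC by blast
          then show False using o dis unfolding sclosure_def by blast
        qed
      qed
      then show "q \<in> intertwined_set P Opn p" using qP unfolding intertwined_set_def by blast
    qed
    have "p \<in> sinterior Opn (intertwined_set P Opn p)"
      using C sub unfolding closed_nbhd_def sinterior_def by blast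
    then show ?thesis using I_closed[OF assms(1)] unfolding closed_nbhd_def by blast
  qed
  show ?thesis using e1 e24 e32 by blast
qed

end
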